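(* Let $A$ be a finite alphabet and $k\ge 1$. Let $x,y\in A^*$ be $k$-binomially equivalent. Then for all words $p,q,r\in A^*$, the words $pxqyr$ and $pyqxr$ are $(k+1)$-binomially equivalent.
   Context: For words $w,z\in A^*$, $\binom{w}{z}$ denotes the number of occurrences of $z$ as a (scattered) subword of $w$, i.e. the number of strictly increasing maps $\varphi:\{1,\ldots,|z|\}\to\{1,\ldots,|w|\}$ with $w_{\varphi(1)}\cdots w_{\varphi(|z|)}=z$ (with $\binom{w}{\varepsilon}=1$). Two words $u,v$ are $m$-binomially equivalent if $\binom{u}{z}=\binom{v}{z}$ for all words $z$ of length at most $m$. *)

theory Defs
  imports Main
begin

text \<open>Number of occurrences of z as a scattered subword of w: the number of
  index sets I of size |z| (equivalently strictly increasing maps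
  {1..|z|} -> {1..|w|}) such that the letters of w at I, in increasing order, spell z.\<close>
definition subword_count :: "'a list \<Rightarrow> 'a list \<Rightarrow> nat" where
  "subword_count w z =
     card {I. I \<subseteq> {0..<length w} \<and> card I = length z \<and> nths w I = z}"

definition binom_equiv :: "nat \<Rightarrow> 'a list \<Rightarrow> 'a list \<Rightarrow> bool" where
  "binom_equiv m u v \<longleftrightarrow> (\<forall>z. length z \<le> m \<longrightarrow> subword_count u z = subword_count v z)"

end

theory Submission imports Defs begin

definition SS :: "'a list \<Rightarrow> 'a list \<Rightarrow> nat set set" where
  "SS w z = {I. I \<subseteq> {0..<length w} \<and> nths w I = z}"

lemma sc_SS: "subword_count w z = card (SS w z)"
proof -
  have "\<And>I. I \<subseteq> {0..<length w} \<Longrightarrow> card I = length (nths w I)"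
  proof -
    fix I assume "I \<subseteq> {0..<length w}"
    then have "{i. i < length w \<and> i \<in> I} = I" by auto
    then show "card I = length (nths w I)" by (simp add: length_nths)
  qed
  then have "{I. I \<subseteq> {0..<length w} \<and> card I = length z \<and> nths w I = z} = SS w z"
    unfolding SS_def by auto
  then show ?thesis unfolding subword_count_def by simp
qed

lemma finite_SS: "finite (SS w z)"
  by (rule finite_subset[of _ "Pow {0..<length w}"]) (auto simp: SS_def)

lemma SS_Nil: "SS w [] = {{}}"
proof -
  have "\<And>I. I \<subseteq> {0..<length w} \<Longrightarrow> nths w I = [] \<Longrightarrow> I = {}"
  proof -
    fix I assume a: "I \<subseteq> {0..<length w}" "nths w I = []"
    then have "{i. i < length w \<and> i \<in> I} = I" by auto
    with a have "card I = 0" using length_nths[of w I] by simp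
    moreover have "finite I" using a finite_subset by blast
    ultimately show "I = {}" by simp
  qed
  then show ?thesis unfolding SS_def by auto
qed

lemma SS_Cons: "SS (c#w) z = (\<lambda>J. Suc ` J) ` SS w z \<union>
   (if z \<noteq> [] \<and> hd z = c then (\<lambda>J. insert 0 (Suc ` J)) ` SS w (tl z) else {})"
proof (rule set_eqI)
  fix I
  let ?J = "{j. Suc j \<in> I}"
  show "I \<in> SS (c#w) z \<longleftrightarrow> I \<in> (\<lambda>J. Suc ` J) ` SS w z \<union>
   (if z \<noteq> [] \<and> hd z = c then (\<lambda>J. insert 0 (Suc ` J)) ` SS w (tl z) else {})"
  proof
    assume I: "I \<in> SS (c#w) z"
    have J: "?J \<subseteq> {0..<length w}" using I by (auto simp: SS_def)
    have n: "nths (c#w) I = z" using I by (simp add: SS_def)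
    show "I \<in> (\<lambda>J. Suc ` J) ` SS w z \<union>
     (if z \<noteq> [] \<and> hd z = c then (\<lambda>J. insert 0 (Suc ` J)) ` SS w (tl z) else {})"
    proof (cases "0 \<in> I")
      case True
      have eq: "I = insert 0 (Suc ` ?J)"
        using True by (auto simp: image_iff) (metis not0_implies_Suc)
      have "z = c # nths w ?J" using n True by (simp add: nths_Cons)
      then show ?thesis using eq J by (auto simp: SS_def image_iff)
    next
      case False
      have eq: "I = Suc ` ?J"
        using False by (auto simp: image_iff) (metis not0_implies_Suc)
      have "z = nths w ?J" using n False by (simp add: nths_Cons)
      then show ?thesis using eq J by (auto simp: SS_def image_iff)
    qed
  next
    assume "I \<in> (\<lambda>J. Suc ` J) ` SS w z \<union>
     (if z \<noteq> [] \<and> hd z = c then (\<lambda>J. insert 0 (Suc ` J)) ` SS w (tl z) else {})"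
    then show "I \<in> SS (c#w) z"
    proof
      assume "I \<in> (\<lambda>J. Suc ` J) ` SS w z"
      then obtain J where J: "J \<in> SS w z" "I = Suc ` J" by blast
      have "{j. Suc j \<in> Suc ` J} = J" by auto
      then show ?thesis using J by (auto simp: SS_def nths_Cons)
    next
      assume h: "I \<in> (if z \<noteq> [] \<and> hd z = c then (\<lambda>J. insert 0 (Suc ` J)) ` SS w (tl z) else {})"
      then have z: "z \<noteq> []" "hd z = c" by (auto split: if_splits)
      with h obtain J where J: "J \<in> SS w (tl z)" "I = insert 0 (Suc ` J)" by auto
      have "{j. Suc j \<in> insert 0 (Suc ` J)} = J" by auto
      then show ?thesis using J z by (auto simp: SS_def nths_Cons)
    qed
  qed
qed

lemma sc_Nil2: "subword_count w [] = 1"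
  by (simp add: sc_SS SS_Nil)

lemma sc_Nil1: "subword_count [] z = (if z = [] then 1 else 0)"
  by (auto simp: sc_SS SS_def)

lemma sc_Cons: "subword_count (c#w) z = subword_count w z +
   (if z \<noteq> [] \<and> hd z = c then subword_count w (tl z) else 0)"
proof -
  have inj1: "inj_on (\<lambda>J. Suc ` J) A" for A :: "nat set set"
    by (rule inj_onI) (simp add: inj_image_eq_iff)
  have inj2: "inj_on (\<lambda>J. insert 0 (Suc ` J)) A" for A :: "nat set set"
  proof (rule inj_onI)
    fix X Y :: "nat set" assume "insert 0 (Suc ` X) = insert 0 (Suc ` Y)"
    then have "insert 0 (Suc ` X) - {0} = insert 0 (Suc ` Y) - {0}" by simp
    then have "Suc ` X = Suc ` Y" by auto
    then show "X = Y" by (simp add: inj_image_eq_iff)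
  qed
  have d: "(\<lambda>J. Suc ` J) ` SS w z \<inter> (\<lambda>J. insert 0 (Suc ` J)) ` SS w (tl z) = {}" by auto
  show ?thesis
    unfolding sc_SS SS_Cons
    using card_image[OF inj1] card_image[OF inj2] d finite_SS
    by (auto simp: card_Un_disjoint[OF finite_imageI[OF finite_SS] finite_imageI[OF finite_SS]])
qed

lemma sc_append: "subword_count (u@v) z =
   (\<Sum>i\<le>length z. subword_count u (take i z) * subword_count v (drop i z))"
proof (induction u arbitrary: z)
  case Nil
  show ?case
    by (cases z) (simp_all add: sum.atMost_Suc_shift sc_Nil1 sc_Nil2 del: sum.atMost_Suc)
next
  case (Cons c u)
  show ?case
  proof (cases z)
    case Nil
    then show ?thesis by (simp add: sc_Nil2)
  next
    case (Cons a zs)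
    have "subword_count ((c#u)@v) z = subword_count (u@v) z +
        (if a = c then subword_count (u@v) zs else 0)"
      using Cons by (simp add: sc_Cons)
    also have "\<dots> = (\<Sum>i\<le>length z. subword_count u (take i z) * subword_count v (drop i z))
       + (if a = c then (\<Sum>i\<le>length zs. subword_count u (take i zs) * subword_count v (drop i zs)) else 0)"
      using Cons.IH by simp
    also have "(if a = c then (\<Sum>i\<le>length zs. subword_count u (take i zs) * subword_count v (drop i zs)) else 0)
       = (\<Sum>i\<le>length z. (if take i z \<noteq> [] \<and> hd (take i z) = c then subword_count u (tl (take i z)) else 0) * subword_count v (drop i z))"
      using Cons by (simp add: sum.atMost_Suc_shift del: sum.atMost_Suc)
    also have "(\<Sum>i\<le>length z. subword_count u (take i z) * subword_count v (drop i z)) + \<dots>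
       = (\<Sum>i\<le>length z. subword_count (c#u) (take i z) * subword_count v (drop i z))"
      by (simp add: sc_Cons sum.distrib[symmetric] algebra_simps)
    finally show ?thesis .
  qed
qed

lemma equiv_left: "binom_equiv m x y \<Longrightarrow> binom_equiv m (u@x) (u@y)"
  unfolding binom_equiv_def
  by (auto simp: sc_append intro!: sum.cong)

lemma equiv_right: "binom_equiv m x y \<Longrightarrow> binom_equiv m (x@u) (y@u)"
  unfolding binom_equiv_def
  by (auto simp: sc_append intro!: sum.cong)

lemma equiv_sym: "binom_equiv m x y \<Longrightarrow> binom_equiv m y x"
  unfolding binom_equiv_def by auto

lemma equiv_trans: "binom_equiv m x y \<Longrightarrow> binom_equiv m y w \<Longrightarrow> binom_equiv m x w"
  unfolding binom_equiv_def by auto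

lemma sum_split0: "(\<Sum>i\<le>n. f i) = f 0 + (\<Sum>i\<in>{1..n}. f i)" for f :: "nat \<Rightarrow> nat"
proof -
  have "{..n} = insert 0 {1..n}" by auto
  then show ?thesis by simp
qed

lemma sum_split0n: "n \<ge> 1 \<Longrightarrow> (\<Sum>i\<le>n. f i) = f 0 + (\<Sum>i\<in>{1..<n}. f i) + f n"
  for f :: "nat \<Rightarrow> nat"
proof -
  assume n: "n \<ge> 1"
  have "{1..n} = insert n {1..<n}" using n by auto
  then show ?thesis by (simp add: sum_split0)
qed

lemma middle:
  assumes E: "binom_equiv k x y"
  shows "binom_equiv (k+1) (x@q@y) (y@q@x)"
  unfolding binom_equiv_def
proof (intro allI impI)
  fix z :: "'a list" assume lz: "length z \<le> k+1"
  show "subword_count (x@q@y) z = subword_count (y@q@x) z"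
  proof (cases "length z \<le> k")
    case True
    have "binom_equiv k (x@q@y) (y@q@x)"
      by (rule equiv_trans[OF equiv_right[OF E]])
         (rule equiv_left[OF equiv_left[OF equiv_sym[OF E]]])
    then show ?thesis using True unfolding binom_equiv_def by blast
  next
    case False
    then have n: "length z = k+1" using lz by simp
    define n where "n = length z"
    have n1: "n \<ge> 1" using n n_def by simp
    define M where "M = (\<Sum>j\<in>{1..n}. subword_count q (take j z) * subword_count x (drop j z))"
    have qy: "subword_count (q@y) z = subword_count y z + M"
      unfolding sc_append sum_split0 M_def n_def
      using E n unfolding binom_equiv_def
      by (auto simp: sc_Nil2 intro!: sum.cong)
    have qx: "subword_count (q@x) z = subword_count x z + M"
      unfolding sc_append sum_split0 M_def n_def
      by (simp add: sc_Nil2)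
    define R where "R = (\<Sum>i\<in>{1..<n}. subword_count y (take i z) * subword_count (q@x) (drop i z))"
    have L: "subword_count (x@q@y) z = subword_count (q@y) z + R + subword_count x z"
    proof -
      have eqs: "subword_count x (take i z) * subword_count (q@y) (drop i z)
         = subword_count y (take i z) * subword_count (q@x) (drop i z)" if "i \<in> {1..<n}" for i
      proof -
        have "binom_equiv k (q@y) (q@x)" by (rule equiv_left[OF equiv_sym[OF E]])
        moreover have "length (drop i z) \<le> k" "length (take i z) \<le> k" using that n n_def by auto
        ultimately show ?thesis using E unfolding binom_equiv_def by metis
      qed
      have S: "(\<Sum>i\<in>{1..<n}. subword_count x (take i z) * subword_count (q@y) (drop i z)) = R"
        unfolding R_def by (rule sum.cong[OF refl eqs])
      have tz: "take n z = z" "drop n z = []" by (simp_all add: n_def)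
      show ?thesis
        unfolding sc_append[of x "q@y"] n_def[symmetric] sum_split0n[OF n1] S
        using tz by (simp add: sc_Nil2)
    qed
    have Rr: "subword_count (y@q@x) z = subword_count (q@x) z + R + subword_count y z"
      unfolding sc_append[of y "q@x"] n_def[symmetric] sum_split0n[OF n1] R_def
      by (simp add: sc_Nil2 n_def)
    show ?thesis using L Rr qx qy by simp
  qed
qed

theorem mainTheorem3:
  fixes x y p q r :: "'a::finite list" and k :: nat
  assumes "k \<ge> 1"
    and "binom_equiv k x y"
  shows "binom_equiv (k + 1) (p @ x @ q @ y @ r) (p @ y @ q @ x @ r)"
proof -
  have "binom_equiv (k+1) (p @ ((x@q@y) @ r)) (p @ ((y@q@x) @ r))"
    by (rule equiv_left[OF equiv_right[OF middle[OF assms(2)]]])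
  then show ?thesis by simp
qed

end
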